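(* Let $M$ be an Orlicz function and let $L_M$ be the Orlicz space either on $(0,1)$ or on $(0,\infty)$. Then $$4\Big\|\bigoplus_{k\geq1}\sigma_{\lambda_k}f_k\Big\|_{L_M}\geq \sum_{k\geq1}\lambda_k\|f_k\|_{L_M}$$ for every sequence $(f_k)_{k\ge1}\subset L_M$ and every sequence $(\lambda_k)_{k\ge1}\subset(0,1)$ with $\sum_{k\ge1}\lambda_k=1$.
   Context: An Orlicz function is an even convex function $M$ on $\mathbb{R}$ with $M(0)=0$; $\|g\|_{L_M}=\inf\{\lambda>0:\int M(|g|/\lambda)\le1\}$. The dilation is $(\sigma_u g)(t)=g(t/u)$ (functions defined only on $(0,1)$ are extended by $0$). $\bigoplus_k g_k$ denotes the disjoint sum of the functions $g_k$, i.e. a measurable function on the underlying interval whose distribution function is $\sum_k m(\{|g_k|>t\})$ (a function equimeasurable with the $g_k$ placed on pairwise disjoint sets). *)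

theory Defs
  imports "HOL-Analysis.Analysis"
begin

definition orlicz_function :: "(real \<Rightarrow> real) \<Rightarrow> bool" where
  "orlicz_function M \<longleftrightarrow> convex_on UNIV M \<and> (\<forall>x. M (-x) = M x) \<and> M 0 = 0"

text \<open>Luxemburg norm on the interval I (Lebesgue measure on I), valued in [0,\<infinity>];
  the infimum of the empty set is \<infinity>.\<close>
definition orlicz_norm :: "(real \<Rightarrow> real) \<Rightarrow> real set \<Rightarrow> (real \<Rightarrow> real) \<Rightarrow> ennreal" where
  "orlicz_norm M I g = Inf {ennreal c | c. c > 0 \<and>
      (\<integral>\<^sup>+ x. ennreal (M (\<bar>g x\<bar> / c)) \<partial>(lebesgue_on I)) \<le> 1}"

definition in_orlicz :: "(real \<Rightarrow> real) \<Rightarrow> real set \<Rightarrow> (real \<Rightarrow> real) \<Rightarrow> bool" where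
  "in_orlicz M I g \<longleftrightarrow> g \<in> borel_measurable (lebesgue_on I) \<and> orlicz_norm M I g < \<infinity>"

definition dilation :: "real set \<Rightarrow> real \<Rightarrow> (real \<Rightarrow> real) \<Rightarrow> real \<Rightarrow> real" where
  "dilation I u g t = (if t / u \<in> I then g (t / u) else 0)"

text \<open>h is a disjoint sum of the g k on I: measurable on I and its distribution
  function is the sum of the distribution functions of the g k.\<close>
definition is_disjoint_sum :: "real set \<Rightarrow> (nat \<Rightarrow> real \<Rightarrow> real) \<Rightarrow> (real \<Rightarrow> real) \<Rightarrow> bool" where
  "is_disjoint_sum I g h \<longleftrightarrow> h \<in> borel_measurable (lebesgue_on I) \<and>
     (\<forall>t>0. emeasure (lebesgue_on I) {x\<in>I. \<bar>h x\<bar> > t}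
            = (\<Sum>k. emeasure (lebesgue_on I) {x\<in>I. \<bar>g k x\<bar> > t}))"

end

theory Submission
  imports Defs
begin


lemma orl_nonneg: assumes "orlicz_function M" shows "0 \<le> M x"
proof -
  have c: "convex_on UNIV M" and e: "M (-x) = M x" and z: "M 0 = 0"
    using assms by (auto simp: orlicz_function_def)
  have "M ((1 - 1/2) *\<^sub>R x + (1/2) *\<^sub>R (-x)) \<le> (1 - 1/2) * M x + (1/2) * M (-x)"
    by (rule convex_onD[OF c]) auto
  then show ?thesis using e z by simp
qed

lemma orl_scale: assumes "orlicz_function M" "0 \<le> a" "a \<le> 1" shows "M (a * x) \<le> a * M x"
proof -
  have c: "convex_on UNIV M" and z: "M 0 = 0"
    using assms by (auto simp: orlicz_function_def)
  have "M ((1 - a) *\<^sub>R 0 + a *\<^sub>R x) \<le> (1 - a) * M 0 + a * M x"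
    by (rule convex_onD[OF c]) (use assms in auto)
  then show ?thesis using z by simp
qed

lemma orl_mono: assumes "orlicz_function M" "0 \<le> x" "x \<le> y" shows "M x \<le> M y"
proof (cases "y = 0")
  case True then show ?thesis using assms by simp
next
  case False
  then have y: "y > 0" using assms by simp
  have "M ((x/y) * y) \<le> (x/y) * M y"
    by (rule orl_scale) (use assms y in auto)
  also have "\<dots> \<le> M y" using orl_nonneg[OF assms(1), of y] assms y
  proof -
    have "x * M y \<le> y * M y" using assms orl_nonneg[OF assms(1), of y] by (simp add: mult_right_mono)
    then show ?thesis using y by (simp add: divide_le_eq mult.commute)
  qed
  finally show ?thesis using y by simp
qed

lemma orl_cont: assumes "orlicz_function M" shows "continuous_on UNIV M"
  using convex_on_continuous[of UNIV M] assms by (auto simp: orlicz_function_def)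

lemma orl_level:
  assumes "orlicz_function M" "s > 0"
  shows "(\<forall>x. M x \<le> s) \<or> (\<exists>T>0. \<forall>x\<ge>0. s < M x \<longleftrightarrow> T < x)"
proof (cases "\<forall>x. M x \<le> s")
  case True then show ?thesis by blast
next
  case False
  then obtain x0 where x0: "s < M x0" by (auto simp: not_le)
  have e: "\<And>x. M (-x) = M x" and z: "M 0 = 0" using assms by (auto simp: orlicz_function_def)
  define x1 where "x1 = \<bar>x0\<bar>"
  have x1: "s < M x1" "0 \<le> x1" using x0 e[of x0] by (auto simp: x1_def abs_if)
  define A where "A = {x. 0 \<le> x \<and> M x \<le> s}"
  have A0: "0 \<in> A" using z assms by (simp add: A_def)
  have Abd: "\<And>x. x \<in> A \<Longrightarrow> x \<le> x1"
  proof (rule ccontr)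
    fix x assume "x \<in> A" "\<not> x \<le> x1"
    then have "M x1 \<le> M x" using orl_mono[OF assms(1) x1(2)] by auto
    then show False using \<open>x \<in> A\<close> x1 by (auto simp: A_def)
  qed
  define T where "T = Sup A"
  have bdd: "bdd_above A" using Abd by (auto simp: bdd_above_def)
  have cl: "closed A"
  proof -
    have "A = {0..} \<inter> M -` {..s}" by (auto simp: A_def)
    moreover have "closed (M -` {..s})"
      using orl_cont[OF assms(1)] by (intro continuous_closed_vimage) (auto simp: continuous_on_eq_continuous_at)
    ultimately show ?thesis by auto
  qed
  have TA: "T \<in> A" unfolding T_def using closed_contains_Sup[OF _ bdd cl] A0 by blast
  have "continuous (at 0) M" using orl_cont[OF assms(1)] by (simp add: continuous_on_eq_continuous_at)
  then obtain d where d: "d > 0" "\<And>y. dist y 0 < d \<Longrightarrow> dist (M y) (M 0) < s"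
    using assms(2) unfolding continuous_at_eps_delta by blast
  have "d/2 \<in> A" using d(2)[of "d/2"] d(1) z by (auto simp: A_def dist_real_def)
  then have Tpos: "T > 0" using cSup_upper[OF _ bdd] d(1) unfolding T_def by fastforce
  have "\<forall>x\<ge>0. s < M x \<longleftrightarrow> T < x"
  proof (intro allI impI iffI)
    fix x :: real assume "0 \<le> x" "s < M x"
    show "T < x"
    proof (rule ccontr)
      assume "\<not> T < x"
      then have "M x \<le> M T" using orl_mono[OF assms(1) \<open>0 \<le> x\<close>] by auto
      then show False using TA \<open>s < M x\<close> by (auto simp: A_def)
    qed
  next
    fix x :: real assume "0 \<le> x" "T < x"
    then have "x \<notin> A" using cSup_upper[OF _ bdd] unfolding T_def by force
    then show "s < M x" using \<open>0 \<le> x\<close> by (auto simp: A_def)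
  qed
  then show ?thesis using Tpos by blast
qed



lemma sigma_finite_lebesgue: "sigma_finite_measure (lebesgue :: real measure)"
proof
  show "\<exists>A::real set set. countable A \<and> A \<subseteq> sets lebesgue \<and> \<Union>A = space lebesgue \<and> (\<forall>a\<in>A. emeasure lebesgue a \<noteq> \<infinity>)"
  proof (intro exI conjI)
    let ?A = "range (\<lambda>n::nat. {- real n..real n})"
    show "countable ?A" by simp
    show "?A \<subseteq> sets lebesgue" by auto
    show "\<Union>?A = space lebesgue"
    proof -
      have "x \<in> \<Union>?A" for x :: real
      proof -
        obtain n :: nat where "\<bar>x\<bar> \<le> real n" using real_arch_simple by blast
        then show ?thesis by (auto intro!: exI[of _ n])
      qed
      then show ?thesis by auto
    qed
    show "\<forall>a\<in>?A. emeasure lebesgue a \<noteq> \<infinity>" by auto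
  qed
qed

lemma sigma_finite_lebesgue_on: "S \<in> sets lebesgue \<Longrightarrow> sigma_finite_measure (lebesgue_on (S::real set))"
  by (rule sigma_finite_measure_restrict_space[OF sigma_finite_lebesgue]) auto

lemma layer_cake:
  fixes u :: "'a \<Rightarrow> real"
  assumes sf: "sigma_finite_measure N" and u: "u \<in> borel_measurable N" and nn: "\<And>x. 0 \<le> u x"
  shows "(\<integral>\<^sup>+x. ennreal (u x) \<partial>N) = (\<integral>\<^sup>+s. (\<integral>\<^sup>+x. indicator {0<..<u x} s \<partial>N) \<partial>lborel)"
proof -
  interpret N: sigma_finite_measure N by fact
  interpret P: pair_sigma_finite N lborel by (intro pair_sigma_finite.intro sf lborel.sigma_finite_measure_axioms)
  have "(\<integral>\<^sup>+x. ennreal (u x) \<partial>N) = (\<integral>\<^sup>+x. (\<integral>\<^sup>+s. indicator {0<..<u x} s \<partial>lborel) \<partial>N)"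
    using nn by (intro nn_integral_cong) simp
  also have "\<dots> = (\<integral>\<^sup>+s. (\<integral>\<^sup>+x. indicator {0<..<u x} s \<partial>N) \<partial>lborel)"
  proof -
    have "(\<lambda>p. indicator {0<..<u (fst p)} (snd p) :: ennreal) = (\<lambda>p. indicator {p. 0 < snd p \<and> snd p < u (fst p)} p)"
      by (auto simp: fun_eq_iff split: split_indicator)
    moreover have "{p \<in> space (N \<Otimes>\<^sub>M lborel). 0 < snd p \<and> snd p < u (fst p)} \<in> sets (N \<Otimes>\<^sub>M lborel)"
      using u by measurable
    ultimately have "(\<lambda>p. indicator {0<..<u (fst p)} (snd p) :: ennreal) \<in> borel_measurable (N \<Otimes>\<^sub>M lborel)"
      by (simp add: borel_measurable_indicator_iff Int_def space_pair_measure conj_commute)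
    then have "(\<lambda>(x, s). indicator {0<..<u x} s :: ennreal) \<in> borel_measurable (N \<Otimes>\<^sub>M lborel)"
      by (simp add: case_prod_beta')
    from P.Fubini'[OF this] show ?thesis by simp
  qed
  finally show ?thesis .
qed

lemma level_integral:
  fixes u :: "'a \<Rightarrow> real"
  assumes "u \<in> borel_measurable N"
  shows "(\<integral>\<^sup>+x. indicator {0<..<u x} s \<partial>N) = indicator {0<..} s * emeasure N {x\<in>space N. s < u x}"
proof (cases "0 < s")
  case True
  have "(\<integral>\<^sup>+x. indicator {0<..<u x} s \<partial>N) = (\<integral>\<^sup>+x. indicator {x\<in>space N. s < u x} x \<partial>N)"
    using True by (intro nn_integral_cong) (auto split: split_indicator)
  also have "\<dots> = emeasure N {x\<in>space N. s < u x}"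
    using assms by (intro nn_integral_indicator) (measurable, auto intro: borel_open)
  finally show ?thesis using True by simp
next
  case False
  then show ?thesis by (simp add: indicator_def)
qed

lemma I_sets: fixes I :: "real set" assumes "I = {0<..<1} \<or> I = {0<..}" shows "I \<in> sets lebesgue"
proof -
  have "sets borel \<subseteq> sets (lebesgue :: real measure)" by force
  moreover have "I \<in> sets borel" using assms by (auto intro: borel_open)
  ultimately show ?thesis by blast
qed

lemma dil_level:
  assumes I: "I = {0<..<1} \<or> I = {0<..}" and l: "0 < l" "l < 1" and t: "0 \<le> t"
  shows "emeasure (lebesgue_on I) {x\<in>I. t < \<bar>dilation I l g x\<bar>}
       = ennreal l * emeasure (lebesgue_on I) {x\<in>I. t < \<bar>g x\<bar>}"
proof -
  have mapI: "l * y \<in> I" if "y \<in> I" for y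
  proof -
    have "0 < l * y" using that I l by auto
    moreover have "l * y < 1" if "y < 1" using \<open>y \<in> I\<close> I l that
      by (smt (verit) mult_less_cancel_right2 mult_pos_pos greaterThan_iff greaterThanLessThan_iff)
    ultimately show ?thesis using I \<open>y \<in> I\<close> by auto
  qed
  have eq: "{x\<in>I. t < \<bar>dilation I l g x\<bar>} = (\<lambda>y. l *\<^sub>R y + 0) ` {y\<in>I. t < \<bar>g y\<bar>}"
  proof (intro set_eqI iffI)
    fix x assume "x \<in> {x\<in>I. t < \<bar>dilation I l g x\<bar>}"
    then have "x / l \<in> I" "t < \<bar>g (x / l)\<bar>" using t by (auto simp: dilation_def split: if_splits)
    moreover have "x = l *\<^sub>R (x / l) + 0" using l by simp
    ultimately show "x \<in> (\<lambda>y. l *\<^sub>R y + 0) ` {y\<in>I. t < \<bar>g y\<bar>}" by blast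
  next
    fix x assume "x \<in> (\<lambda>y. l *\<^sub>R y + 0) ` {y\<in>I. t < \<bar>g y\<bar>}"
    then obtain y where y: "x = l * y" "y \<in> I" "t < \<bar>g y\<bar>" by auto
    then show "x \<in> {x\<in>I. t < \<bar>dilation I l g x\<bar>}" using l mapI by (auto simp: dilation_def)
  qed
  have II: "I \<inter> space lebesgue \<in> sets lebesgue" using I_sets[OF I] by simp
  have "emeasure (lebesgue_on I) {x\<in>I. t < \<bar>dilation I l g x\<bar>} = emeasure lebesgue {x\<in>I. t < \<bar>dilation I l g x\<bar>}"
    by (rule emeasure_restrict_space[OF II]) auto
  also have "\<dots> = ennreal l * emeasure lebesgue {y\<in>I. t < \<bar>g y\<bar>}"
    unfolding eq using emeasure_lebesgue_affine[of l 0 "{y\<in>I. t < \<bar>g y\<bar>}"] l by simp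
  also have "emeasure lebesgue {y\<in>I. t < \<bar>g y\<bar>} = emeasure (lebesgue_on I) {y\<in>I. t < \<bar>g y\<bar>}"
    by (rule emeasure_restrict_space[OF II, symmetric]) auto
  finally show ?thesis .
qed



lemma decomp:
  fixes M :: "real \<Rightarrow> real" and I :: "real set"
    and f :: "nat \<Rightarrow> real \<Rightarrow> real" and lam :: "nat \<Rightarrow> real" and h :: "real \<Rightarrow> real"
  assumes orl: "orlicz_function M"
    and I: "I = {0<..<1} \<or> I = {0<..}"
    and fm: "\<And>k. f k \<in> borel_measurable (lebesgue_on I)"
    and lam: "\<And>k. 0 < lam k \<and> lam k < 1"
    and ds: "is_disjoint_sum I (\<lambda>k. dilation I (lam k) (f k)) h"
    and c: "c > 0"
  shows "(\<integral>\<^sup>+x. ennreal (M (\<bar>h x\<bar> / c)) \<partial>(lebesgue_on I))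
       = (\<Sum>k. ennreal (lam k) * (\<integral>\<^sup>+x. ennreal (M (\<bar>f k x\<bar> / c)) \<partial>(lebesgue_on I)))"
proof -
  let ?N = "lebesgue_on I"
  have sf: "sigma_finite_measure ?N" by (rule sigma_finite_lebesgue_on[OF I_sets[OF I]])
  interpret N: sigma_finite_measure ?N by (rule sf)
  have hm: "h \<in> borel_measurable ?N" using ds by (simp add: is_disjoint_sum_def)
  have Mm: "M \<in> borel_measurable borel" by (rule borel_measurable_continuous_onI[OF orl_cont[OF orl]])
  define U where "U g x = M (\<bar>g x\<bar> / c)" for g :: "real \<Rightarrow> real" and x
  define G where "G g s = (\<integral>\<^sup>+x. indicator {0<..<U g x} s \<partial>?N)" for g :: "real \<Rightarrow> real" and s :: real
  have Um: "U g \<in> borel_measurable ?N" if "g \<in> borel_measurable ?N" for g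
    unfolding U_def using that Mm by measurable
  have Unn: "0 \<le> U g x" for g x unfolding U_def by (rule orl_nonneg[OF orl])
  have lc: "(\<integral>\<^sup>+x. ennreal (U g x) \<partial>?N) = (\<integral>\<^sup>+s. G g s \<partial>lborel)" if "g \<in> borel_measurable ?N" for g
    unfolding G_def by (rule layer_cake[OF sf Um[OF that] Unn])
  have Gm: "G g \<in> borel_measurable lborel" if "g \<in> borel_measurable ?N" for g
  proof -
    have "(\<lambda>p. indicator {0<..<U g (snd p)} (fst p) :: ennreal) = (\<lambda>p. indicator {p. 0 < fst p \<and> fst p < U g (snd p)} p)"
      by (auto simp: fun_eq_iff split: split_indicator)
    moreover have "{p \<in> space (lborel \<Otimes>\<^sub>M ?N). 0 < fst p \<and> fst p < U g (snd p)} \<in> sets (lborel \<Otimes>\<^sub>M ?N)"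
      using Um[OF that] by measurable
    ultimately have "(\<lambda>p. indicator {0<..<U g (snd p)} (fst p) :: ennreal) \<in> borel_measurable (lborel \<Otimes>\<^sub>M ?N)"
      by (simp add: borel_measurable_indicator_iff Int_def space_pair_measure conj_commute)
    then have "(\<lambda>(s, x). indicator {0<..<U g x} s :: ennreal) \<in> borel_measurable (lborel \<Otimes>\<^sub>M ?N)"
      by (simp add: case_prod_beta')
    from N.borel_measurable_nn_integral[OF this] show ?thesis unfolding G_def by simp
  qed
  have Glev: "G g s = indicator {0<..} s * emeasure ?N {x\<in>I. s < U g x}" if "g \<in> borel_measurable ?N" for g s
    unfolding G_def using level_integral[OF Um[OF that], of s] by simp
  have pw: "G h s = (\<Sum>k. ennreal (lam k) * G (f k) s)" for s
  proof (cases "0 < s")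
    case False
    then show ?thesis using Glev[OF hm] Glev[OF fm] by simp
  next
    case True
    from orl_level[OF orl True] show ?thesis
    proof
      assume all: "\<forall>x. M x \<le> s"
      have e: "{x\<in>I. s < U g x} = {}" for g using all unfolding U_def by (auto simp: not_less)
      show ?thesis by (simp only: Glev[OF hm] Glev[OF fm] e) simp
    next
      assume "\<exists>T>0. \<forall>x\<ge>0. s < M x \<longleftrightarrow> T < x"
      then obtain T where T: "T > 0" "\<And>x. x \<ge> 0 \<Longrightarrow> s < M x \<longleftrightarrow> T < x" by blast
      have seteq: "{x\<in>I. s < U g x} = {x\<in>I. c * T < \<bar>g x\<bar>}" for g
      proof -
        have "s < U g x \<longleftrightarrow> c * T < \<bar>g x\<bar>" for x
          unfolding U_def using T(2)[of "\<bar>g x\<bar> / c"] c by (simp add: pos_less_divide_eq mult.commute)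
        then show ?thesis by auto
      qed
      have cT: "c * T > 0" using c T by simp
      have "emeasure ?N {x\<in>I. c * T < \<bar>h x\<bar>}
          = (\<Sum>k. emeasure ?N {x\<in>I. c * T < \<bar>dilation I (lam k) (f k) x\<bar>})"
        using ds cT by (simp add: is_disjoint_sum_def)
      also have "\<dots> = (\<Sum>k. ennreal (lam k) * emeasure ?N {x\<in>I. c * T < \<bar>f k x\<bar>})"
        using dil_level[OF I, of "lam k" "c * T" "f k" for k] lam cT by simp
      finally show ?thesis using Glev[OF hm] Glev[OF fm] seteq True by simp
    qed
  qed
  have "(\<integral>\<^sup>+x. ennreal (M (\<bar>h x\<bar> / c)) \<partial>?N) = (\<integral>\<^sup>+s. G h s \<partial>lborel)"
    using lc[OF hm] by (simp add: U_def)
  also have "\<dots> = (\<integral>\<^sup>+s. (\<Sum>k. ennreal (lam k) * G (f k) s) \<partial>lborel)"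
    by (simp add: pw)
  also have "\<dots> = (\<Sum>k. (\<integral>\<^sup>+s. ennreal (lam k) * G (f k) s \<partial>lborel))"
    by (rule nn_integral_suminf) (use Gm[OF fm] in measurable)
  also have "\<dots> = (\<Sum>k. ennreal (lam k) * (\<integral>\<^sup>+s. G (f k) s \<partial>lborel))"
    by (simp add: nn_integral_cmult[OF Gm[OF fm]])
  also have "\<dots> = (\<Sum>k. ennreal (lam k) * (\<integral>\<^sup>+x. ennreal (M (\<bar>f k x\<bar> / c)) \<partial>?N))"
    using lc[OF fm] by (simp add: U_def)
  finally show ?thesis .
qed



lemma norm_bound:
  fixes M :: "real \<Rightarrow> real" and I :: "real set" and g :: "real \<Rightarrow> real"
  assumes orl: "orlicz_function M"
    and gm: "g \<in> borel_measurable (lebesgue_on I)"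
    and c: "c > 0"
    and fin: "(\<integral>\<^sup>+x. ennreal (M (\<bar>g x\<bar> / c)) \<partial>(lebesgue_on I)) < \<infinity>"
  shows "orlicz_norm M I g \<le> ennreal c * (1 + (\<integral>\<^sup>+x. ennreal (M (\<bar>g x\<bar> / c)) \<partial>(lebesgue_on I)))"
proof -
  define F where "F = (\<integral>\<^sup>+x. ennreal (M (\<bar>g x\<bar> / c)) \<partial>(lebesgue_on I))"
  have Mm: "M \<in> borel_measurable borel" by (rule borel_measurable_continuous_onI[OF orl_cont[OF orl]])
  show ?thesis
  proof (cases "F \<le> 1")
    case True
    then have "orlicz_norm M I g \<le> ennreal c"
      unfolding orlicz_norm_def F_def using c by (intro Inf_lower) auto
    also have "\<dots> \<le> ennreal c * (1 + F)" using mult_left_mono[of 1 "1 + F" "ennreal c"] by simp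
    finally show ?thesis unfolding F_def .
  next
    case False
    obtain a where a: "F = ennreal a" "0 \<le> a" using fin unfolding F_def[symmetric]
      by (cases F rule: ennreal_cases) auto
    have a1: "a > 1" using False a by (simp add: not_le)
    have "(\<integral>\<^sup>+x. ennreal (M (\<bar>g x\<bar> / (c * a))) \<partial>(lebesgue_on I))
        \<le> (\<integral>\<^sup>+x. ennreal (1 / a) * ennreal (M (\<bar>g x\<bar> / c)) \<partial>(lebesgue_on I))"
    proof (intro nn_integral_mono)
      fix x
      have "M ((1 / a) * (\<bar>g x\<bar> / c)) \<le> (1 / a) * M (\<bar>g x\<bar> / c)"
        by (rule orl_scale[OF orl]) (use a1 in auto)
      then have "ennreal (M (\<bar>g x\<bar> / (c * a))) \<le> ennreal ((1 / a) * M (\<bar>g x\<bar> / c))"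
        by (intro ennreal_leI) (simp add: mult.commute)
      show "ennreal (M (\<bar>g x\<bar> / (c * a))) \<le> ennreal (1 / a) * ennreal (M (\<bar>g x\<bar> / c))"
      proof -
        have "ennreal (1 / a) * ennreal (M (\<bar>g x\<bar> / c)) = ennreal ((1 / a) * M (\<bar>g x\<bar> / c))"
          using ennreal_mult[of "1 / a" "M (\<bar>g x\<bar> / c)"] orl_nonneg[OF orl] a1 by simp
        then show ?thesis using \<open>ennreal (M (\<bar>g x\<bar> / (c * a))) \<le> ennreal ((1 / a) * M (\<bar>g x\<bar> / c))\<close> by simp
      qed
    qed
    also have "\<dots> = ennreal (1 / a) * F"
      unfolding F_def by (rule nn_integral_cmult) (use gm Mm in measurable)
    also have "\<dots> = 1" using a a1 by (simp add: ennreal_mult[symmetric])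
    finally have "orlicz_norm M I g \<le> ennreal (c * a)"
      unfolding orlicz_norm_def using c a1 by (intro Inf_lower) auto
    also have "\<dots> = ennreal c * F" using a c by (simp add: ennreal_mult)
    also have "\<dots> \<le> ennreal c * (1 + F)" by (intro mult_left_mono) auto
    finally show ?thesis unfolding F_def .
  qed
qed


theorem lemma3p2:
  fixes M :: "real \<Rightarrow> real" and I :: "real set"
    and f :: "nat \<Rightarrow> real \<Rightarrow> real" and lam :: "nat \<Rightarrow> real" and h :: "real \<Rightarrow> real"
  assumes "orlicz_function M"
    and "I = {0<..<1} \<or> I = {0<..}"
    and "\<And>k. in_orlicz M I (f k)"
    and "\<And>k. 0 < lam k \<and> lam k < 1"
    and "lam sums 1"
    and "is_disjoint_sum I (\<lambda>k. dilation I (lam k) (f k)) h"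
  shows "4 * orlicz_norm M I h \<ge> (\<Sum>k. ennreal (lam k) * orlicz_norm M I (f k))"
proof -
  note orl = assms(1) and I = assms(2) and lam = assms(4) and ds = assms(6)
  have fm: "\<And>k. f k \<in> borel_measurable (lebesgue_on I)" using assms(3) unfolding in_orlicz_def by blast
  define F where "F g c = (\<integral>\<^sup>+x. ennreal (M (\<bar>g x\<bar> / c)) \<partial>(lebesgue_on I))" for g c
  define R where "R = (\<Sum>k. ennreal (lam k) * orlicz_norm M I (f k))"
  have lamsum: "(\<Sum>k. ennreal (lam k)) = 1"
  proof -
    have "\<And>i. 0 \<le> lam i" using lam less_imp_le by blast
    from suminf_ennreal_eq[OF this assms(5)] show ?thesis by (simp only: ennreal_1)
  qed
  have key: "R \<le> ennreal (2 * c)" if c: "c > 0" and hc: "F h c \<le> 1" for c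
  proof -
    have dec: "F h c = (\<Sum>k. ennreal (lam k) * F (f k) c)"
      unfolding F_def by (rule decomp[OF orl I fm lam ds c])
    have fin: "F (f k) c < \<infinity>" for k
    proof -
      have "F h c < \<infinity>" using le_less_trans[OF hc] by simp
      then have "(\<Sum>k. ennreal (lam k) * F (f k) c) < \<infinity>" unfolding dec .
      then have "ennreal (lam k) * F (f k) c < \<infinity>" by (rule ennreal_suminf_lessD)
      then show ?thesis using lam[of k] unfolding ennreal_mult_less_top infinity_ennreal_def by auto
    qed
    have "R \<le> (\<Sum>k. ennreal (lam k) * (ennreal c * (1 + F (f k) c)))"
      unfolding R_def
    proof (rule suminf_le)
      fix k
      have "orlicz_norm M I (f k) \<le> ennreal c * (1 + F (f k) c)"
        using norm_bound[OF orl fm c fin[of k, unfolded F_def]] unfolding F_def .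
      then show "ennreal (lam k) * orlicz_norm M I (f k) \<le> ennreal (lam k) * (ennreal c * (1 + F (f k) c))"
        by (rule mult_left_mono) simp
    qed (rule summableI)+
    also have "\<dots> = (\<Sum>k. ennreal c * ennreal (lam k) + ennreal c * (ennreal (lam k) * F (f k) c))"
      by (intro suminf_cong) (simp add: distrib_left mult.assoc mult.left_commute mult.commute)
    also have "\<dots> = (\<Sum>k. ennreal c * ennreal (lam k)) + (\<Sum>k. ennreal c * (ennreal (lam k) * F (f k) c))"
      by (rule suminf_add[symmetric]) (rule summableI)+
    also have "\<dots> = ennreal c * 1 + ennreal c * F h c"
      using lamsum dec by simp
    also have "\<dots> \<le> ennreal c * 1 + ennreal c * 1"
      using hc by (intro add_left_mono mult_left_mono) auto
    also have "\<dots> = ennreal (2 * c)"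
    proof -
      have "ennreal (c + c) = ennreal c + ennreal c" using c by (intro ennreal_plus) auto
      then show ?thesis by (simp only: mult_1_right mult_2)
    qed
    finally show ?thesis .
  qed
  let ?S = "{ennreal c | c. c > 0 \<and> F h c \<le> 1}"
  have nh: "orlicz_norm M I h = Inf ?S" unfolding orlicz_norm_def F_def by simp
  have "R \<le> 2 * orlicz_norm M I h"
  proof (rule ennreal_le_epsilon)
    fix e :: real assume fin: "2 * orlicz_norm M I h < top" and e: "0 < e"
    obtain r where r: "orlicz_norm M I h = ennreal r" "0 \<le> r"
    proof (cases "orlicz_norm M I h" rule: ennreal_cases)
      case (real r)
      then show ?thesis using that by blast
    next
      case top
      have "(2::ennreal) * top = top" by (simp add: ennreal_mult_top)
      then show ?thesis using fin unfolding top by simp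
    qed
    have "orlicz_norm M I h < ennreal (r + e / 2)" unfolding r(1) using r e by (intro ennreal_lessI) auto
    then have "Inf ?S < ennreal (r + e / 2)" unfolding nh .
    then obtain x where x: "x \<in> ?S" "x < ennreal (r + e / 2)" unfolding Inf_less_iff by blast
    then obtain c where c: "x = ennreal c" "c > 0" "F h c \<le> 1" by blast
    have "ennreal c < ennreal (r + e / 2)" using x(2) unfolding c(1) .
    then have "c < r + e / 2" using ennreal_less_iff[of c "r + e / 2"] c(2) by linarith
    have "R \<le> ennreal (2 * c)" by (rule key[OF c(2,3)])
    also have "\<dots> \<le> ennreal (2 * r + e)" using \<open>c < r + e / 2\<close> by (intro ennreal_leI) simp
    also have "\<dots> = 2 * orlicz_norm M I h + ennreal e"
    proof -
      have "ennreal (2 * r + e) = ennreal (2 * r) + ennreal e" using r e by (intro ennreal_plus) auto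
      moreover have "ennreal (2 * r) = 2 * ennreal r" using ennreal_mult[of 2 r] r by simp
      ultimately show ?thesis using r by simp
    qed
    finally show "R \<le> 2 * orlicz_norm M I h + ennreal e" .
  qed
  also have "\<dots> \<le> 4 * orlicz_norm M I h" by (intro mult_right_mono) auto
  finally show ?thesis unfolding R_def .
qed


end
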